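(* Let $c$ be an odd positive integer and let $K$ be the set partition of $S_c$ whose only part with more than one element is the set of cyclic shifts of the identity, $\{12\cdots c,\ 23\cdots c1,\ \ldots,\ c12\cdots(c-1)\}$. Let $n>c$ be even. Then the number of even non-avoiders in $S_n$ equals the number of odd non-avoiders in $S_n$.
   Context: Permutations are written in one-line notation as words. The order permutation (standardization) of a word $u$ of distinct positive integers of length $\ell$ is the unique $\pi\in S_\ell$ with $\pi_i<\pi_j$ iff $u_i<u_j$. A hit in a permutation is a contiguous subword of length $c$ whose order permutation is a cyclic shift of the identity of $S_c$; a non-avoider is a permutation containing at least one hit. Even/odd refers to the sign of a permutation. *)

theory Defs
  imports "HOL-Combinatorics.Permutations"
begin

definition perms_n :: "nat \<Rightarrow> nat list set" where
  "perms_n n = {p. distinct p \<and> set p = {1..n}}"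

text \<open>Order permutation (standardization) of a word of distinct positive integers.\<close>
definition std :: "nat list \<Rightarrow> nat list" where
  "std u = map (\<lambda>x. card {y \<in> set u. y \<le> x}) u"

definition cyc_shifts :: "nat \<Rightarrow> nat list set" where
  "cyc_shifts c = {rotate k [1..<c+1] | k. k < c}"

text \<open>A hit: contiguous subword of length c starting at (0-based) position i whose
  order permutation is a cyclic shift of the identity of S_c.\<close>
definition is_hit :: "nat \<Rightarrow> nat list \<Rightarrow> nat \<Rightarrow> bool" where
  "is_hit c p i \<longleftrightarrow> i + c \<le> length p \<and> std (take c (drop i p)) \<in> cyc_shifts c"

definition non_avoider :: "nat \<Rightarrow> nat list \<Rightarrow> bool" where
  "non_avoider c p \<longleftrightarrow> (\<exists>i. is_hit c p i)"

definition perm_of_word :: "nat list \<Rightarrow> nat \<Rightarrow> nat" where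
  "perm_of_word p = (\<lambda>i. if 1 \<le> i \<and> i \<le> length p then p ! (i - 1) else i)"

end

theory Submission
  imports Defs
begin

definition sig :: "nat \<Rightarrow> nat \<Rightarrow> nat" where
  "sig n v = (if 1 \<le> v \<and> v \<le> n then v mod n + 1 else v)"

lemma sig_step: "m \<ge> 1 \<Longrightarrow> sig (Suc m) = sig m \<circ> transpose m (Suc m)"
  by (rule ext) (auto simp: sig_def transpose_def)

lemma sig_perm: "n \<ge> 1 \<Longrightarrow> permutation (sig n) \<and> (evenperm (sig n) \<longleftrightarrow> odd n)"
proof (induction n rule: nat_induct_at_least)
  case base
  have "sig 1 x = x" for x
  proof (cases "1 \<le> x \<and> x \<le> (1::nat)")
    case True then have "x = 1" by (rule conjE) (rule antisym)
    then show ?thesis by (simp add: sig_def)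
  next
    case False then show ?thesis unfolding sig_def by (simp only: if_False)
  qed
  then have e: "sig 1 = id" by (simp add: fun_eq_iff)
  show ?case unfolding e by (simp add: permutation_id)
next
  case (Suc m)
  have p: "permutation (sig m)" and e: "evenperm (sig m) = odd m" using Suc(2) by blast+
  have s: "sig (Suc m) = sig m \<circ> transpose m (Suc m)" by (rule sig_step[OF Suc(1)])
  have "permutation (sig m \<circ> transpose m (Suc m))"
    by (rule permutation_compose[OF p permutation_swap_id])
  moreover have "evenperm (sig m \<circ> transpose m (Suc m)) = (evenperm (sig m) = evenperm (transpose m (Suc m)))"
    by (rule evenperm_comp[OF p permutation_swap_id])
  moreover have "evenperm (transpose m (Suc m)) = False" by (simp add: evenperm_swap)
  moreover have "(odd m = False) = odd (Suc m)" by simp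
  ultimately show ?case unfolding s using e by metis
qed

lemma perms_len: "p \<in> perms_n n \<Longrightarrow> length p = n"
proof -
  assume "p \<in> perms_n n"
  then have d: "distinct p" "set p = {1..n}" by (auto simp: perms_n_def)
  have "length p = card (set p)" using distinct_card[OF d(1)] by simp
  then show "length p = n" using d(2) by simp
qed

lemma pow_permutes: assumes "p \<in> perms_n n" shows "perm_of_word p permutes {1..n}"
proof (rule bij_imp_permutes)
  have len: "length p = n" using perms_len assms by blast
  have "perm_of_word p ` {1..n} = (\<lambda>i. p ! (i - 1)) ` {1..n}"
    using len by (auto simp: perm_of_word_def)
  also have "\<dots> = (\<lambda>i. p ! i) ` {0..<n}"
  proof -
    have "{1..n} = Suc ` {0..<n}" by (auto simp: image_iff)
    moreover have "(\<lambda>i. p ! (i - 1)) ` (Suc ` {0..<n}) = (\<lambda>i. p ! i) ` {0..<n}"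
      by (simp only: image_image diff_Suc_1)
    ultimately show ?thesis by metis
  qed
  also have "\<dots> = set p" using len by (auto simp: set_conv_nth)
  also have "\<dots> = {1..n}" using assms by (simp add: perms_n_def)
  finally have im: "perm_of_word p ` {1..n} = {1..n}" .
  then have "inj_on (perm_of_word p) {1..n}" by (simp add: inj_on_iff_eq_card)
  then show "bij_betw (perm_of_word p) {1..n} {1..n}" using im by (simp add: bij_betw_def)
  show "\<And>x. x \<notin> {1..n} \<Longrightarrow> perm_of_word p x = x" using len by (auto simp: perm_of_word_def)
qed

lemma pow_map: assumes "p \<in> perms_n n"
  shows "perm_of_word (map (sig n) p) = sig n \<circ> perm_of_word p"
proof (rule ext)
  fix i
  have len: "length p = n" using perms_len assms by blast
  show "perm_of_word (map (sig n) p) i = (sig n \<circ> perm_of_word p) i"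
    using len by (auto simp: perm_of_word_def sig_def)
qed

lemma sign_flip: assumes "p \<in> perms_n n" "n \<ge> 1" "even n"
  shows "evenperm (perm_of_word (map (sig n) p)) \<longleftrightarrow> \<not> evenperm (perm_of_word p)"
proof -
  have "permutation (perm_of_word p)" using pow_permutes[OF assms(1)] permutes_imp_permutation by blast
  then show ?thesis using sig_perm[OF assms(2)] assms(3) pow_map[OF assms(1)] by (simp add: evenperm_comp)
qed

lemma sig_inj: "n \<ge> 1 \<Longrightarrow> inj (sig n)"
  using sig_perm permutation_bijective bij_is_inj by blast

lemma cyc_char: assumes "c > 0"
  shows "u \<in> cyc_shifts c \<longleftrightarrow> length u = c \<and> (\<exists>k<c. \<forall>j<c. u ! j = (j + k) mod c + 1)"
proof
  assume "u \<in> cyc_shifts c"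
  then obtain k where k: "k < c" "u = rotate k [1..<c+1]" by (auto simp: cyc_shifts_def)
  have "\<forall>j<c. u ! j = (j + k) mod c + 1"
    using k assms by (auto simp del: upt_Suc simp add: nth_rotate add.commute nth_upt)
  then show "length u = c \<and> (\<exists>k<c. \<forall>j<c. u ! j = (j + k) mod c + 1)" using k by auto
next
  assume "length u = c \<and> (\<exists>k<c. \<forall>j<c. u ! j = (j + k) mod c + 1)"
  then obtain k where k: "k < c" "length u = c" "\<forall>j<c. u ! j = (j + k) mod c + 1" by auto
  have "u = rotate k [1..<c+1]"
    by (rule nth_equalityI) (use k assms in \<open>auto simp del: upt_Suc simp add: nth_rotate add.commute nth_upt\<close>)
  then show "u \<in> cyc_shifts c" using k by (auto simp: cyc_shifts_def)
qed

lemma mod_back: assumes "1 \<le> (a::nat)" "a \<le> c" "a mod c = m mod c"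
  shows "a = (m + (c - 1)) mod c + 1"
proof -
  have "(m + (c - 1)) mod c = (m mod c + (c - 1)) mod c" by (simp add: mod_add_left_eq)
  also have "\<dots> = (a mod c + (c - 1)) mod c" using assms by simp
  also have "\<dots> = (a + (c - 1)) mod c" by (simp add: mod_add_left_eq)
  also have "a + (c - 1) = (a - 1) + c" using assms by simp
  also have "((a - 1) + c) mod c = (a - 1) mod c" by (rule mod_add_self2)
  also have "(a - 1) mod c = a - 1" using assms by simp
  finally show ?thesis using assms by simp
qed

lemma rot_cyc: assumes "c > 0" "set u \<subseteq> {1..c}"
  shows "map (\<lambda>r. r mod c + 1) u \<in> cyc_shifts c \<longleftrightarrow> u \<in> cyc_shifts c"
proof
  assume "map (\<lambda>r. r mod c + 1) u \<in> cyc_shifts c"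
  then obtain k where k: "k < c" "length u = c" "\<forall>j<c. u ! j mod c + 1 = (j + k) mod c + 1"
    using cyc_char[OF assms(1)] by auto
  have "\<forall>j<c. u ! j = (j + (k + (c - 1)) mod c) mod c + 1"
  proof (intro allI impI)
    fix j assume j: "j < c"
    have "u ! j \<in> {1..c}" using assms(2) k(2) j nth_mem by blast
    then have "u ! j = (j + k + (c - 1)) mod c + 1"
      using mod_back[of "u ! j" c "j + k"] k(3) j by auto
    then show "u ! j = (j + (k + (c - 1)) mod c) mod c + 1"
      by (simp add: mod_add_right_eq add.assoc)
  qed
  moreover have "(k + (c - 1)) mod c < c" using assms by simp
  ultimately show "u \<in> cyc_shifts c" using cyc_char[OF assms(1)] k(2) by blast
next
  assume "u \<in> cyc_shifts c"
  then obtain k where k: "k < c" "length u = c" "\<forall>j<c. u ! j = (j + k) mod c + 1"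
    using cyc_char[OF assms(1)] by auto
  have "\<forall>j<c. map (\<lambda>r. r mod c + 1) u ! j = (j + (k + 1) mod c) mod c + 1"
  proof (intro allI impI)
    fix j assume j: "j < c"
    have "map (\<lambda>r. r mod c + 1) u ! j = ((j + k) mod c + 1) mod c + 1" using k j by simp
    also have "\<dots> = (j + k + 1) mod c + 1" by (simp add: mod_Suc_eq)
    also have "\<dots> = (j + (k + 1) mod c) mod c + 1" by (simp add: mod_add_right_eq add.assoc)
    finally show "map (\<lambda>r. r mod c + 1) u ! j = (j + (k + 1) mod c) mod c + 1" .
  qed
  moreover have "(k + 1) mod c < c" using assms by simp
  ultimately show "map (\<lambda>r. r mod c + 1) u \<in> cyc_shifts c"
    using cyc_char[OF assms(1)] k(2) by simp blast
qed

lemma std_mono: assumes "\<forall>x\<in>set w. \<forall>y\<in>set w. (h x \<le> h y) = (x \<le> y)"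
  shows "std (map h w) = std w"
proof -
  have inj: "inj_on h (set w)" using assms by (metis inj_onI order_antisym order_refl)
  have "\<And>x. x \<in> set w \<Longrightarrow> card {y \<in> h ` set w. y \<le> h x} = card {y \<in> set w. y \<le> x}"
  proof -
    fix x assume x: "x \<in> set w"
    have "{y \<in> h ` set w. y \<le> h x} = h ` {y \<in> set w. y \<le> x}" using assms x by auto
    then show "card {y \<in> h ` set w. y \<le> h x} = card {y \<in> set w. y \<le> x}"
      using card_image inj inj_on_subset by (metis (no_types, lifting) mem_Collect_eq subsetI)
  qed
  then show ?thesis by (simp add: std_def)
qed

lemma std_set: "set (std w) \<subseteq> {1..length w}"
proof
  fix r assume "r \<in> set (std w)"
  then obtain x where x: "x \<in> set w" "r = card {y \<in> set w. y \<le> x}" by (auto simp: std_def)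
  have "r \<ge> 1" using x by (metis (no_types, lifting) One_nat_def Suc_leI card_gt_0_iff empty_iff
       finite_set finite_subset mem_Collect_eq order_refl subsetI)
  moreover have "r \<le> card (set w)" using x by (simp add: card_mono)
  moreover have "card (set w) \<le> length w" by (rule card_length)
  ultimately show "r \<in> {1..length w}" by auto
qed

lemma sig_val: "1 \<le> v \<Longrightarrow> v \<le> n \<Longrightarrow> sig n v = (if v = n then 1 else v + 1)"
  by (auto simp: sig_def)

lemma std_rot: assumes d: "distinct w" and sub: "set w \<subseteq> {1..n}" and nin: "n \<in> set w"
  shows "std (map (sig n) w) = map (\<lambda>r. r mod length w + 1) (std w)"
proof -
  let ?S = "set w" and ?L = "length w" and ?h = "sig n"
  have n1: "n \<ge> 1" using sub nin by auto
  have inj: "inj_on ?h ?S" using sig_inj[OF n1] inj_on_subset by blast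
  have cardS: "card ?S = ?L" using d by (rule distinct_card)
  have key: "card {y \<in> ?h ` ?S. y \<le> ?h x} = card {y \<in> ?S. y \<le> x} mod ?L + 1" if x: "x \<in> ?S" for x
  proof (cases "x = n")
    case True
    have hx: "?h x = 1" using True n1 by (simp add: sig_def)
    have "{y \<in> ?h ` ?S. y \<le> ?h x} = {1}"
    proof -
      have "\<forall>y\<in>?S. ?h y \<ge> 1" using sub by (auto simp: sig_def)
      then show ?thesis using hx x True by force
    qed
    moreover have "{y \<in> ?S. y \<le> x} = ?S" using sub True by auto
    ultimately show ?thesis using cardS by simp
  next
    case False
    have xn: "x < n" "1 \<le> x" using False x sub by force+
    have hx: "?h x = x + 1" using xn by (simp add: sig_def)
    have "{y \<in> ?h ` ?S. y \<le> ?h x} = ?h ` (insert n {y \<in> ?S. y \<le> x})"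
    proof (rule set_eqI, rule iffI)
      fix z assume "z \<in> {y \<in> ?h ` ?S. y \<le> ?h x}"
      then obtain y where y: "y \<in> ?S" "z = ?h y" "?h y \<le> x + 1" using hx by auto
      have "1 \<le> y" "y \<le> n" using y sub by auto
      then have "y = n \<or> y \<le> x" using y sig_val[of y n] by (auto split: if_splits)
      then show "z \<in> ?h ` (insert n {y \<in> ?S. y \<le> x})" using y by auto
    next
      fix z assume "z \<in> ?h ` (insert n {y \<in> ?S. y \<le> x})"
      then obtain y where y: "y = n \<or> (y \<in> ?S \<and> y \<le> x)" "z = ?h y" by auto
      show "z \<in> {y \<in> ?h ` ?S. y \<le> ?h x}"
      proof (cases "y = n")
        case True
        have "?h n \<in> ?h ` ?S" using nin by blast
        moreover have "?h n = 1" using n1 by (simp add: sig_def)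
        ultimately show ?thesis using y True hx by auto
      next
        case False
        then have "y \<in> ?S" "y \<le> x" "1 \<le> y" "y < n" using y xn sub by force+
        then have "?h y \<in> ?h ` ?S" by blast
        moreover have "?h y = y + 1" using \<open>1 \<le> y\<close> \<open>y < n\<close> by (simp add: sig_def)
        ultimately show ?thesis using y hx \<open>y \<le> x\<close> by auto
      qed
    qed
    moreover have "card (?h ` (insert n {y \<in> ?S. y \<le> x})) = card (insert n {y \<in> ?S. y \<le> x})"
      by (rule card_image, rule inj_on_subset[OF inj]) (use nin in auto)
    moreover have "card (insert n {y \<in> ?S. y \<le> x}) = card {y \<in> ?S. y \<le> x} + 1"
      using xn by simp
    moreover have "card {y \<in> ?S. y \<le> x} < ?L"
    proof -
      have "n \<notin> {y \<in> ?S. y \<le> x}" using xn by simp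
      then have "{y \<in> ?S. y \<le> x} \<subset> ?S" using nin by blast
      then show ?thesis using cardS by (metis finite_set psubset_card_mono)
    qed
    ultimately show ?thesis by simp
  qed
  show ?thesis unfolding std_def using key by simp
qed

lemma hit_iff: assumes p: "p \<in> perms_n n" and c: "c > 0"
  shows "is_hit c (map (sig n) p) i \<longleftrightarrow> is_hit c p i"
proof (cases "i + c \<le> length p")
  case False then show ?thesis by (simp add: is_hit_def)
next
  case True
  let ?w = "take c (drop i p)"
  have lw: "length ?w = c" using True by simp
  have dp: "distinct p" "set p = {1..n}" using p by (auto simp: perms_n_def)
  have dw: "distinct ?w" using dp by (simp add: distinct_take distinct_drop)
  have sw: "set ?w \<subseteq> {1..n}" using dp by (metis set_drop_subset set_take_subset subset_trans)
  have tw: "take c (drop i (map (sig n) p)) = map (sig n) ?w" by (simp add: take_map drop_map)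
  have "std (map (sig n) ?w) \<in> cyc_shifts c \<longleftrightarrow> std ?w \<in> cyc_shifts c"
  proof (cases "n \<in> set ?w")
    case True
    show ?thesis using std_rot[OF dw sw True] rot_cyc[OF c, of "std ?w"] std_set[of ?w] lw by simp
  next
    case False
    have "\<forall>x\<in>set ?w. \<forall>y\<in>set ?w. (sig n x \<le> sig n y) = (x \<le> y)"
    proof (intro ballI)
      fix x y assume xy: "x \<in> set ?w" "y \<in> set ?w"
      then have "x \<in> {1..n}" "y \<in> {1..n}" "x \<noteq> n" "y \<noteq> n" using sw False by blast+
      then have "1 \<le> x" "x < n" "1 \<le> y" "y < n" by auto
      then show "(sig n x \<le> sig n y) = (x \<le> y)" by (simp add: sig_def)
    qed
    then show ?thesis using std_mono by metis
  qed
  then show ?thesis using True tw by (simp add: is_hit_def)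
qed

lemma sig_image: "n \<ge> 1 \<Longrightarrow> sig n ` {1..n} = {1..n}"
proof -
  assume n1: "n \<ge> 1"
  have "sig n v \<in> {1..n}" if v: "v \<in> {1..n}" for v
  proof -
    have "v mod n < n" using n1 by simp
    then have "Suc (v mod n) \<le> n" by (rule Suc_leI)
    then show ?thesis using v by (simp add: sig_def)
  qed
  then have sub: "sig n ` {1..n} \<subseteq> {1..n}" by blast
  have "card (sig n ` {1..n}) = card {1..n}"
    using sig_inj[OF n1] by (simp add: card_image inj_on_subset)
  then show ?thesis using sub by (simp add: card_subset_eq)
qed

lemma f_perms: assumes "n \<ge> 1" "p \<in> perms_n n" shows "map (sig n) p \<in> perms_n n"
proof -
  have i: "inj_on (sig n) (set p)" using sig_inj[OF assms(1)] by (meson inj_on_subset subset_UNIV)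
  have "distinct p" "set p = {1..n}" using assms(2) by (auto simp: perms_n_def)
  then show ?thesis using i sig_image[OF assms(1)] by (simp add: perms_n_def distinct_map)
qed

lemma g_perms: assumes "n \<ge> 1" "p \<in> perms_n n" shows "map (inv (sig n)) p \<in> perms_n n"
proof -
  have b: "bij (sig n)" using sig_perm[OF assms(1)] permutation_bijective by blast
  have "inj (inv (sig n))" using b bij_imp_bij_inv bij_is_inj by blast
  then have i: "inj_on (inv (sig n)) (set p)" by (meson inj_on_subset subset_UNIV)
  have im: "inv (sig n) ` {1..n} = {1..n}"
    using sig_image[OF assms(1)] b by (metis bij_is_inj image_inv_f_f)
  have "distinct p" "set p = {1..n}" using assms(2) by (auto simp: perms_n_def)
  then show ?thesis using i im by (simp add: perms_n_def distinct_map)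
qed

lemma na_iff: "p \<in> perms_n n \<Longrightarrow> c > 0 \<Longrightarrow> non_avoider c (map (sig n) p) \<longleftrightarrow> non_avoider c p"
  using hit_iff by (simp add: non_avoider_def)

theorem theorem2p14:
  fixes c n :: nat
  assumes "odd c" and "c > 0" and "n > c" and "even n"
  shows "card {p \<in> perms_n n. non_avoider c p \<and> evenperm (perm_of_word p)}
       = card {p \<in> perms_n n. non_avoider c p \<and> \<not> evenperm (perm_of_word p)}"
proof -
  have n1: "n \<ge> 1" using assms by simp
  have b: "bij (sig n)" using sig_perm[OF n1] permutation_bijective by blast
  have ci: "sig n \<circ> inv (sig n) = id" using b bij_is_surj surj_iff by blast
  let ?A = "{p \<in> perms_n n. non_avoider c p \<and> evenperm (perm_of_word p)}"
  let ?B = "{p \<in> perms_n n. non_avoider c p \<and> \<not> evenperm (perm_of_word p)}"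
  have "bij_betw (map (sig n)) ?A ?B"
  proof (rule bij_betw_byWitness[where f'="map (inv (sig n))"])
    show "\<forall>a\<in>?A. map (inv (sig n)) (map (sig n) a) = a"
      using b by (simp add: bij_is_inj)
    show "\<forall>a\<in>?B. map (sig n) (map (inv (sig n)) a) = a"
      using ci by simp
    show "map (sig n) ` ?A \<subseteq> ?B"
      using f_perms[OF n1] na_iff[OF _ assms(2)] sign_flip[OF _ n1 assms(4)] by auto
    show "map (inv (sig n)) ` ?B \<subseteq> ?A"
    proof
      fix q assume "q \<in> map (inv (sig n)) ` ?B"
      then obtain r where r: "r \<in> ?B" "q = map (inv (sig n)) r" by auto
      have qp: "q \<in> perms_n n" using g_perms[OF n1] r by auto
      have fq: "map (sig n) q = r" using r ci by simp
      show "q \<in> ?A" using qp r fq na_iff[OF qp assms(2)] sign_flip[OF qp n1 assms(4)] by auto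
    qed
  qed
  then show ?thesis by (rule bij_betw_same_card)
qed

end
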